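(* Under the assumptions on $(\xi_t,\zeta_t)_{t=1}^L$, $Q$, $R$, $\sigma_\zeta$, $\gamma_0$ stated in the context, define for $k\ge0$ the processes $\rho^k_0=0$, $\rho^k_t=(I-\gamma_tQ)\rho^k_{t-1}+\gamma_t\zeta^k_t$ ($t\in[L]$), where $\zeta^0_t:=\zeta_t$ and $\zeta^k_t:=(Q-\xi_t\xi_t^\top)\rho^{k-1}_{t-1}$ for $k\ge1$. Then for all $k\ge0$ and $t\in[L]$, $$\mathbb E[\zeta^k_t\zeta^{k\top}_t]\preceq\sigma_\zeta^2\gamma_0^kR^{2k}Q\qquad\text{and}\qquad\mathbb E[\rho^k_t\rho^{k\top}_t]\preceq\sigma_\zeta^2\gamma_0^{k+1}R^{2k}I.$$
   Context: Assumptions: $(\xi_t,\zeta_t)_{t=1}^L$ are independent pairs of random vectors in $\mathbb R^M$ with $\mathbb E[\xi_t\xi_t^\top]=Q$, $\mathbb E[\zeta_t]=0$, $\mathbb E[\xi_t\xi_t^\top\xi_t\xi_t^\top]\preceq R^2Q$, $\mathbb E[\zeta_t\zeta_t^\top]\preceq\sigma_\zeta^2Q$, and $\gamma_0R^2\le1/4$. Stepsizes: $\gamma_t=\gamma_0/2^{\ell}$ with $\ell=\lfloor t/(L/\log L)\rfloor$ ($\log$ base 2), $t=1,\dots,L$. $\preceq$ is the Loewner order, $[L]=\{1,\dots,L\}$. *)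

theory Defs
  imports "HOL-Probability.Probability"
begin

definition outer :: "real^'n \<Rightarrow> real^'n \<Rightarrow> real^'n^'n" where
  "outer x y = (\<chi> i j. x $ i * y $ j)"

definition loewner_le :: "real^'n^'n \<Rightarrow> real^'n^'n \<Rightarrow> bool" where
  "loewner_le A B \<longleftrightarrow> (\<forall>v. v \<bullet> ((B - A) *v v) \<ge> 0)"

definition stepsize :: "real \<Rightarrow> nat \<Rightarrow> nat \<Rightarrow> real" where
  "stepsize g0 L t = g0 / 2 ^ nat \<lfloor>real t / (real L / log 2 (real L))\<rfloor>"

fun rho :: "(nat \<Rightarrow> real) \<Rightarrow> real^'n^'n \<Rightarrow> (nat \<Rightarrow> 'a \<Rightarrow> real^'n) \<Rightarrow> (nat \<Rightarrow> 'a \<Rightarrow> real^'n)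
            \<Rightarrow> nat \<Rightarrow> nat \<Rightarrow> 'a \<Rightarrow> real^'n" where
  "rho g Q xi ze k 0 \<omega> = 0"
| "rho g Q xi ze k (Suc t) \<omega> =
     (mat 1 - g (Suc t) *\<^sub>R Q) *v rho g Q xi ze k t \<omega>
     + g (Suc t) *\<^sub>R (case k of 0 \<Rightarrow> ze (Suc t) \<omega>
                          | Suc j \<Rightarrow> (Q - outer (xi (Suc t) \<omega>) (xi (Suc t) \<omega>)) *v rho g Q xi ze j t \<omega>)"

definition zetak :: "(nat \<Rightarrow> real) \<Rightarrow> real^'n^'n \<Rightarrow> (nat \<Rightarrow> 'a \<Rightarrow> real^'n) \<Rightarrow> (nat \<Rightarrow> 'a \<Rightarrow> real^'n)
            \<Rightarrow> nat \<Rightarrow> nat \<Rightarrow> 'a \<Rightarrow> real^'n" where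
  "zetak g Q xi ze k t \<omega> = (case k of 0 \<Rightarrow> ze t \<omega>
       | Suc j \<Rightarrow> (Q - outer (xi t \<omega>) (xi t \<omega>)) *v rho g Q xi ze j (t - 1) \<omega>)"

end

theory Submission
  imports Defs
begin


lemma vec_measurableI:
  fixes F :: "'b \<Rightarrow> real^'n"
  assumes "\<And>i. (\<lambda>\<omega>. F \<omega> $ i) \<in> borel_measurable N"
  shows "F \<in> borel_measurable N"
proof (subst borel_measurable_euclidean_space, intro ballI)
  fix b :: "real^'n" assume "b \<in> Basis"
  then obtain i where b: "b = axis i 1" by (auto simp: Basis_vec_def)
  show "(\<lambda>x. F x \<bullet> b) \<in> borel_measurable N" using assms[of i] by (simp add: b cart_eq_inner_axis)
qed

lemma vec_nth_measurable[measurable]: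
  fixes F :: "'b \<Rightarrow> 'c::real_normed_vector^'n"
  assumes [measurable]: "F \<in> borel_measurable N"
  shows "(\<lambda>\<omega>. F \<omega> $ i) \<in> borel_measurable N"
proof -
  have "(\<lambda>x::'c^'n. x $ i) \<in> borel_measurable borel"
    by (intro borel_measurable_continuous_onI continuous_intros)
  then show ?thesis using measurable_compose[OF assms] by auto
qed

lemma vec_sum_axis: "(\<Sum>i\<in>UNIV. axis i (c $ i)) = (c::'c::real_normed_vector^'n)"
  by (simp add: vec_eq_iff axis_def if_distrib cong: if_cong)

lemma bounded_linear_axis: "bounded_linear (axis i :: 'c::real_normed_vector \<Rightarrow> 'c^'n)"
proof -
  have "linear (axis i :: 'c \<Rightarrow> 'c^'n)"
    by (auto simp: linear_iff vec_eq_iff axis_def)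
  moreover have "norm (axis i x :: 'c^'n) \<le> norm x * 1" for x
  proof -
    have "norm (axis i x :: 'c^'n) \<le> (\<Sum>j\<in>UNIV. norm (axis i x $ j))"
      unfolding norm_vec_def by (rule L2_set_le_sum) simp
    also have "\<dots> = norm x" by (simp add: axis_def if_distrib cong: if_cong)
    finally show ?thesis by simp
  qed
  ultimately show ?thesis
    unfolding bounded_linear_def bounded_linear_axioms_def linear_iff
    by (metis (no_types, lifting))
qed

lemma vec_integrableI:
  fixes F :: "'b \<Rightarrow> 'c::euclidean_space^'n"
  assumes "\<And>i. integrable N (\<lambda>\<omega>. F \<omega> $ i)"
  shows "integrable N F"
proof -
  have "integrable N (\<lambda>\<omega>. \<Sum>i\<in>UNIV. axis i (F \<omega> $ i))"
    using assms by (auto intro!: integrable_bounded_linear[OF bounded_linear_axis])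
  then show ?thesis by (simp add: vec_sum_axis)
qed

lemma mat_integrableI:
  fixes F :: "'b \<Rightarrow> real^'n^'m"
  assumes "\<And>i j. integrable N (\<lambda>\<omega>. F \<omega> $ i $ j)"
  shows "integrable N F"
  using assms by (auto intro!: vec_integrableI)

lemma integral_vec_nth:
  fixes F :: "'b \<Rightarrow> 'c::euclidean_space^'n"
  assumes "integrable N F"
  shows "(\<integral>\<omega>. F \<omega> \<partial>N) $ i = (\<integral>\<omega>. F \<omega> $ i \<partial>N)"
  using integral_bounded_linear[OF bounded_linear_vec_nth assms] by simp

lemma integral_mat_nth:
  fixes F :: "'b \<Rightarrow> real^'n^'m"
  assumes "integrable N F"
  shows "(\<integral>\<omega>. F \<omega> \<partial>N) $ i $ j = (\<integral>\<omega>. F \<omega> $ i $ j \<partial>N)"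
  using assms integrable_bounded_linear[OF bounded_linear_vec_nth assms]
  by (simp add: integral_vec_nth)

lemma integrable_mat_nth:
  fixes F :: "'b \<Rightarrow> real^'n^'m"
  assumes "integrable N F"
  shows "integrable N (\<lambda>\<omega>. F \<omega> $ i $ j)"
  using integrable_bounded_linear[OF bounded_linear_vec_nth integrable_bounded_linear[OF bounded_linear_vec_nth assms]] .




lemma outer_mult_vec: "outer p p *v v = (p \<bullet> v) *\<^sub>R p"
  by (simp add: vec_eq_iff outer_def matrix_vector_mult_def inner_vec_def sum_distrib_left mult_ac)

lemma quad_outer: "v \<bullet> (outer p p *v v) = (v \<bullet> p)\<^sup>2"
  by (simp add: outer_mult_vec inner_commute power2_eq_square)

lemma bil_outer: "u \<bullet> (outer p p *v v) = (u \<bullet> p) * (p \<bullet> v)"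
  by (simp add: outer_mult_vec)

lemma quad_outer4: "v \<bullet> ((outer p p ** outer p p) *v v) = (v \<bullet> p)\<^sup>2 * (p \<bullet> p)"
  by (simp add: outer_mult_vec matrix_vector_mul_assoc[symmetric] inner_commute power2_eq_square mult_ac)

lemma linear_quad: "linear (\<lambda>A::real^'n^'n. u \<bullet> (A *v v))"
proof -
  have "u \<bullet> ((c *\<^sub>R A) *v v) = c * (u \<bullet> (A *v v))" for c and A :: "real^'n^'n"
    by (simp add: matrix_vector_mult_def inner_vec_def sum_distrib_left mult_ac)
  then show ?thesis
    by (auto simp: linear_iff matrix_vector_mult_add_rdistrib inner_add_right)
qed

lemma bounded_linear_quad: "bounded_linear (\<lambda>A::real^'n^'n. u \<bullet> (A *v v))"
  using linear_quad linear_conv_bounded_linear by blast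

lemma quad_integral:
  fixes F :: "'b \<Rightarrow> real^'n^'n"
  assumes "integrable N F"
  shows "u \<bullet> ((\<integral>\<omega>. F \<omega> \<partial>N) *v v) = (\<integral>\<omega>. u \<bullet> (F \<omega> *v v) \<partial>N)"
  using integral_bounded_linear[OF bounded_linear_quad assms] by simp

lemma quad_integrable:
  fixes F :: "'b \<Rightarrow> real^'n^'n"
  assumes "integrable N F"
  shows "integrable N (\<lambda>\<omega>. u \<bullet> (F \<omega> *v v))"
  using integrable_bounded_linear[OF bounded_linear_quad assms] by simp

lemma loewner_leD:
  assumes "loewner_le A B" shows "v \<bullet> (A *v v) \<le> v \<bullet> (B *v v)"
  using assms unfolding loewner_le_def
  by (metis diff_ge_0_iff_ge inner_diff_right matrix_vector_mult_diff_rdistrib)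

lemma loewner_leI:
  assumes "\<And>v. v \<bullet> (A *v v) \<le> v \<bullet> (B *v v)" shows "loewner_le A B"
  using assms unfolding loewner_le_def
  by (metis diff_ge_0_iff_ge inner_diff_right matrix_vector_mult_diff_rdistrib)

lemma prod_integrable:
  fixes f g :: "'b \<Rightarrow> real"
  assumes [measurable]: "f \<in> borel_measurable N" "g \<in> borel_measurable N"
    and "integrable N (\<lambda>\<omega>. (f \<omega>)\<^sup>2)" "integrable N (\<lambda>\<omega>. (g \<omega>)\<^sup>2)"
  shows "integrable N (\<lambda>\<omega>. f \<omega> * g \<omega>)"
proof -
  have int: "integrable N (\<lambda>\<omega>. (f \<omega>)\<^sup>2 + (g \<omega>)\<^sup>2)" using assms by auto
  show ?thesis
  proof (rule Bochner_Integration.integrable_bound[OF int])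
  show "AE x in N. norm (f x * g x) \<le> norm ((f x)\<^sup>2 + (g x)\<^sup>2)"
  proof (intro AE_I2)
    fix x
    have "2 * \<bar>f x * g x\<bar> \<le> (f x)\<^sup>2 + (g x)\<^sup>2"
    proof -
      have "0 \<le> (\<bar>f x\<bar> - \<bar>g x\<bar>)\<^sup>2" by simp
      then show ?thesis by (simp add: power2_diff abs_mult)
    qed
    then show "norm (f x * g x) \<le> norm ((f x)\<^sup>2 + (g x)\<^sup>2)" by simp
  qed
qed measurable
qed

definition VL2 :: "'b measure \<Rightarrow> ('b \<Rightarrow> real^'n) \<Rightarrow> bool" where
  "VL2 N X \<longleftrightarrow> X \<in> borel_measurable N \<and> (\<forall>v. integrable N (\<lambda>\<omega>. (v \<bullet> X \<omega>)\<^sup>2))"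

lemma VL2_comp_integrable:
  assumes "VL2 N X" shows "integrable N (\<lambda>\<omega>. X \<omega> $ i * X \<omega> $ j)"
proof -
  have [measurable]: "X \<in> borel_measurable N" using assms by (simp add: VL2_def)
  have "integrable N (\<lambda>\<omega>. (axis i 1 \<bullet> X \<omega>) * (axis j 1 \<bullet> X \<omega>))"
    using assms unfolding VL2_def by (intro prod_integrable) auto
  then show ?thesis by (simp add: inner_axis')
qed

lemma VL2_outer:
  assumes "VL2 N X"
  shows "integrable N (\<lambda>\<omega>. outer (X \<omega>) (X \<omega>))"
    and "v \<bullet> ((\<integral>\<omega>. outer (X \<omega>) (X \<omega>) \<partial>N) *v v) = (\<integral>\<omega>. (v \<bullet> X \<omega>)\<^sup>2 \<partial>N)"
proof -
  show i: "integrable N (\<lambda>\<omega>. outer (X \<omega>) (X \<omega>))"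
    by (rule mat_integrableI) (simp add: outer_def VL2_comp_integrable[OF assms])
  show "v \<bullet> ((\<integral>\<omega>. outer (X \<omega>) (X \<omega>) \<partial>N) *v v) = (\<integral>\<omega>. (v \<bullet> X \<omega>)\<^sup>2 \<partial>N)"
    by (simp add: quad_integral[OF i] quad_outer)
qed




definition avec :: "real^'n^'n \<Rightarrow> real^'n \<Rightarrow> real^'n \<Rightarrow> real^'n" where
  "avec Q v p = v v* (Q - outer p p)"

lemma avec_eq: "avec Q v p = v v* Q - (v \<bullet> p) *\<^sub>R p"
  by (simp add: avec_def vec_eq_iff vector_matrix_mult_def outer_def inner_vec_def sum_subtractf
      right_diff_distrib sum_distrib_left mult_ac)

lemma avec_norm: "norm (avec Q v p) \<le> norm (v v* Q) + norm v * (p \<bullet> p)"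
proof -
  have "norm (avec Q v p) \<le> norm (v v* Q) + norm ((v \<bullet> p) *\<^sub>R p)"
    unfolding avec_eq by (rule norm_triangle_ineq4)
  also have "norm ((v \<bullet> p) *\<^sub>R p) = \<bar>v \<bullet> p\<bar> * norm p" by simp
  also have "\<dots> \<le> norm v * norm p * norm p"
    by (intro mult_right_mono Cauchy_Schwarz_ineq2) simp
  also have "norm v * norm p * norm p = norm v * (p \<bullet> p)"
    by (simp add: power2_norm_eq_inner[symmetric] power2_eq_square)
  finally show ?thesis by simp
qed

locale D6 = prob_space M for M :: "'a measure" +
  fixes xi ze :: "nat \<Rightarrow> 'a \<Rightarrow> real^'n"
    and Q :: "real^'n^'n"
    and R sigma g0 :: real
    and L :: nat
  assumes meas_xi: "\<And>t. t \<in> {1..L} \<Longrightarrow> xi t \<in> borel_measurable M"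
    and meas_ze: "\<And>t. t \<in> {1..L} \<Longrightarrow> ze t \<in> borel_measurable M"
    and indep: "indep_vars (\<lambda>_. borel) (\<lambda>t \<omega>. (xi t \<omega>, ze t \<omega>)) {1..L}"
    and int_xi2: "\<And>t. t \<in> {1..L} \<Longrightarrow> integrable M (\<lambda>\<omega>. outer (xi t \<omega>) (xi t \<omega>))"
    and int_xi4: "\<And>t. t \<in> {1..L} \<Longrightarrow>
       integrable M (\<lambda>\<omega>. outer (xi t \<omega>) (xi t \<omega>) ** outer (xi t \<omega>) (xi t \<omega>))"
    and int_ze: "\<And>t. t \<in> {1..L} \<Longrightarrow> integrable M (ze t)"
    and int_ze2: "\<And>t. t \<in> {1..L} \<Longrightarrow> integrable M (\<lambda>\<omega>. outer (ze t \<omega>) (ze t \<omega>))"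
    and cov: "\<And>t. t \<in> {1..L} \<Longrightarrow> (\<integral>\<omega>. outer (xi t \<omega>) (xi t \<omega>) \<partial>M) = Q"
    and mean0: "\<And>t. t \<in> {1..L} \<Longrightarrow> (\<integral>\<omega>. ze t \<omega> \<partial>M) = 0"
    and fourth: "\<And>t. t \<in> {1..L} \<Longrightarrow>
       loewner_le (\<integral>\<omega>. outer (xi t \<omega>) (xi t \<omega>) ** outer (xi t \<omega>) (xi t \<omega>) \<partial>M) (R^2 *\<^sub>R Q)"
    and noise: "\<And>t. t \<in> {1..L} \<Longrightarrow>
       loewner_le (\<integral>\<omega>. outer (ze t \<omega>) (ze t \<omega>) \<partial>M) (sigma^2 *\<^sub>R Q)"
    and g0_pos: "g0 > 0"
    and g0R: "g0 * R^2 \<le> 1/4"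
begin

abbreviation "g \<equiv> stepsize g0 L"

lemma g_pos: "0 < g t" using g0_pos by (simp add: stepsize_def)
lemma g_le: "g t \<le> g0"
  using g0_pos by (simp add: stepsize_def divide_le_eq one_le_power mult_le_cancel_left1)

lemma quad_scale: "v \<bullet> ((c *\<^sub>R A) *v v) = c * (v \<bullet> (A *v v))" for A :: "real^'n^'n"
  by (simp add: matrix_vector_mult_def inner_vec_def sum_distrib_left mult_ac)

context fixes t assumes t: "t \<in> {1..L}"
begin

lemma xi_meas[measurable]: "xi t \<in> borel_measurable M" using meas_xi[OF t] .
lemma ze_meas[measurable]: "ze t \<in> borel_measurable M" using meas_ze[OF t] .

lemma Ex2: "integrable M (\<lambda>\<omega>. xi t \<omega> $ i * xi t \<omega> $ j)"
    "(\<integral>\<omega>. xi t \<omega> $ i * xi t \<omega> $ j \<partial>M) = Q $ i $ j"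
  using integrable_mat_nth[OF int_xi2[OF t], of i j] integral_mat_nth[OF int_xi2[OF t], of i j] cov[OF t]
  by (auto simp: outer_def)

lemma bil_Q: "integrable M (\<lambda>\<omega>. (u \<bullet> xi t \<omega>) * (xi t \<omega> \<bullet> v))"
    "(\<integral>\<omega>. (u \<bullet> xi t \<omega>) * (xi t \<omega> \<bullet> v) \<partial>M) = u \<bullet> (Q *v v)"
  using quad_integrable[OF int_xi2[OF t], of u v] quad_integral[OF int_xi2[OF t], of u v] cov[OF t]
  by (auto simp: bil_outer)

lemma q_eq: "integrable M (\<lambda>\<omega>. (v \<bullet> xi t \<omega>)\<^sup>2)" "(\<integral>\<omega>. (v \<bullet> xi t \<omega>)\<^sup>2 \<partial>M) = v \<bullet> (Q *v v)"
  using bil_Q[of v v] by (auto simp: inner_commute power2_eq_square)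

lemma q_nonneg: "0 \<le> v \<bullet> (Q *v v)"
  using q_eq(2)[of v] by (metis integral_nonneg_AE AE_I2 zero_le_power2)

lemma E4: "integrable M (\<lambda>\<omega>. (v \<bullet> xi t \<omega>)\<^sup>2 * (xi t \<omega> \<bullet> xi t \<omega>))"
   "(\<integral>\<omega>. (v \<bullet> xi t \<omega>)\<^sup>2 * (xi t \<omega> \<bullet> xi t \<omega>) \<partial>M) \<le> R\<^sup>2 * (v \<bullet> (Q *v v))"
proof -
  show "integrable M (\<lambda>\<omega>. (v \<bullet> xi t \<omega>)\<^sup>2 * (xi t \<omega> \<bullet> xi t \<omega>))"
    using quad_integrable[OF int_xi4[OF t], of v v] by (simp add: quad_outer4)
  have "(\<integral>\<omega>. (v \<bullet> xi t \<omega>)\<^sup>2 * (xi t \<omega> \<bullet> xi t \<omega>) \<partial>M)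
     = v \<bullet> ((\<integral>\<omega>. outer (xi t \<omega>) (xi t \<omega>) ** outer (xi t \<omega>) (xi t \<omega>) \<partial>M) *v v)"
    using quad_integral[OF int_xi4[OF t], of v v] by (simp add: quad_outer4)
  also have "\<dots> \<le> v \<bullet> ((R^2 *\<^sub>R Q) *v v)" by (rule loewner_leD[OF fourth[OF t]])
  finally show "(\<integral>\<omega>. (v \<bullet> xi t \<omega>)\<^sup>2 * (xi t \<omega> \<bullet> xi t \<omega>) \<partial>M) \<le> R\<^sup>2 * (v \<bullet> (Q *v v))"
    by (simp add: quad_scale)
qed

lemma norm4_int: "integrable M (\<lambda>\<omega>. (xi t \<omega> \<bullet> xi t \<omega>)\<^sup>2)"
proof -
  have "integrable M (\<lambda>\<omega>. \<Sum>i\<in>UNIV. (axis i 1 \<bullet> xi t \<omega>)\<^sup>2 * (xi t \<omega> \<bullet> xi t \<omega>))"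
    using E4(1) by auto
  moreover have "(\<Sum>i\<in>UNIV. (axis i 1 \<bullet> p)\<^sup>2 * (p \<bullet> p)) = (p \<bullet> p)\<^sup>2" for p :: "real^'n"
    by (simp add: inner_axis' sum_distrib_right[symmetric] power2_eq_square) (simp add: inner_vec_def)
  ultimately show ?thesis by simp
qed

lemma norm2_int: "integrable M (\<lambda>\<omega>. xi t \<omega> \<bullet> xi t \<omega>)"
proof -
  have "integrable M (\<lambda>\<omega>. \<Sum>i\<in>UNIV. (axis i 1 \<bullet> xi t \<omega>)\<^sup>2)"
    using q_eq(1) by auto
  moreover have "(\<Sum>i\<in>UNIV. (axis i 1 \<bullet> p)\<^sup>2) = (p \<bullet> p)" for p :: "real^'n"
    by (simp add: inner_axis' power2_eq_square) (simp add: inner_vec_def)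
  ultimately show ?thesis by simp
qed

lemma a_meas[measurable]: "(\<lambda>\<omega>. avec Q v (xi t \<omega>)) \<in> borel_measurable M"
  unfolding avec_eq by measurable

lemma a_comp: "integrable M (\<lambda>\<omega>. avec Q v (xi t \<omega>) $ i)" "(\<integral>\<omega>. avec Q v (xi t \<omega>) $ i \<partial>M) = 0"
proof -
  have e: "avec Q v p $ i = (v v* Q) $ i - (v \<bullet> p) * (p \<bullet> axis i 1)" for p
    by (simp add: avec_eq cart_eq_inner_axis[symmetric])
  show "integrable M (\<lambda>\<omega>. avec Q v (xi t \<omega>) $ i)"
    unfolding e using bil_Q(1) by auto
  have "(v v* Q) $ i = v \<bullet> (Q *v axis i 1)"
    by (simp add: dot_lmul_matrix[symmetric] cart_eq_inner_axis)
  then show "(\<integral>\<omega>. avec Q v (xi t \<omega>) $ i \<partial>M) = 0"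
    unfolding e using bil_Q[of v "axis i 1"] by (simp add: prob_space)
qed

lemma a_prod_int: "integrable M (\<lambda>\<omega>. avec Q v (xi t \<omega>) $ i * avec Q v (xi t \<omega>) $ l)"
proof -
  define A where "A = norm (v v* Q)"
  define B where "B = norm v"
  have int: "integrable M (\<lambda>\<omega>. 2 * A\<^sup>2 + 2 * B\<^sup>2 * (xi t \<omega> \<bullet> xi t \<omega>)\<^sup>2)"
    using norm4_int by auto
  show ?thesis
  proof (rule Bochner_Integration.integrable_bound[OF int], measurable, intro AE_I2)
    fix \<omega>
    let ?a = "avec Q v (xi t \<omega>)"
    let ?s = "xi t \<omega> \<bullet> xi t \<omega>"
    have "norm (?a $ i * ?a $ l) \<le> norm ?a * norm ?a"
      by (simp add: abs_mult mult_mono component_le_norm_cart)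
    also have "\<dots> \<le> (A + B * ?s) * (A + B * ?s)"
      using avec_norm[of Q v "xi t \<omega>"] by (intro mult_mono) (auto simp: A_def B_def)
    also have "\<dots> \<le> 2 * A\<^sup>2 + 2 * B\<^sup>2 * ?s\<^sup>2"
    proof -
      have "0 \<le> (A - B * ?s)\<^sup>2" by simp
      then show ?thesis by (simp add: power2_eq_square algebra_simps)
    qed
    also have "\<dots> \<le> norm (2 * A\<^sup>2 + 2 * B\<^sup>2 * ?s\<^sup>2)" by simp
    finally show "norm (?a $ i * ?a $ l) \<le> norm (2 * A\<^sup>2 + 2 * B\<^sup>2 * ?s\<^sup>2)" .
  qed
qed

lemma a_sq: "integrable M (\<lambda>\<omega>. avec Q v (xi t \<omega>) \<bullet> avec Q v (xi t \<omega>))"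
  "(\<integral>\<omega>. avec Q v (xi t \<omega>) \<bullet> avec Q v (xi t \<omega>) \<partial>M)
     = (\<integral>\<omega>. (v \<bullet> xi t \<omega>)\<^sup>2 * (xi t \<omega> \<bullet> xi t \<omega>) \<partial>M) - (v v* Q) \<bullet> (v v* Q)"
proof -
  define w where "w = v v* Q"
  have e: "avec Q v p \<bullet> avec Q v p = w \<bullet> w - 2 * ((v \<bullet> p) * (p \<bullet> w)) + (v \<bullet> p)\<^sup>2 * (p \<bullet> p)" for p
    by (simp add: avec_eq w_def inner_diff_left inner_diff_right inner_commute power2_eq_square algebra_simps)
  show "integrable M (\<lambda>\<omega>. avec Q v (xi t \<omega>) \<bullet> avec Q v (xi t \<omega>))"
    unfolding e using bil_Q(1) E4(1) by auto
  have "v \<bullet> (Q *v w) = w \<bullet> w" by (simp add: w_def dot_lmul_matrix[symmetric])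
  then show "(\<integral>\<omega>. avec Q v (xi t \<omega>) \<bullet> avec Q v (xi t \<omega>) \<partial>M)
     = (\<integral>\<omega>. (v \<bullet> xi t \<omega>)\<^sup>2 * (xi t \<omega> \<bullet> xi t \<omega>) \<partial>M) - (v v* Q) \<bullet> (v v* Q)"
    unfolding e using bil_Q[of v w] E4(1)[of v] by (simp add: prob_space w_def)
qed

lemma a_sq_bound: "(\<integral>\<omega>. avec Q v (xi t \<omega>) \<bullet> avec Q v (xi t \<omega>) \<partial>M) \<le> R\<^sup>2 * (v \<bullet> (Q *v v))"
  using a_sq(2)[of v] E4(2)[of v] inner_ge_zero[of "v v* Q"] by linarith

lemma vQ_bound: "(v v* Q) \<bullet> (v v* Q) \<le> R\<^sup>2 * (v \<bullet> (Q *v v))"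
proof -
  have "0 \<le> (\<integral>\<omega>. avec Q v (xi t \<omega>) \<bullet> avec Q v (xi t \<omega>) \<partial>M)"
    by (intro integral_nonneg_AE AE_I2) simp
  then show ?thesis using a_sq(2)[of v] E4(2)[of v] by simp
qed

end

end




lemma rho_local:
  assumes "\<forall>s\<in>{1..u}. xi s \<omega> = xi' s \<omega>' \<and> ze s \<omega> = ze' s \<omega>'"
  shows "rho g Q xi ze j u \<omega> = rho g Q xi' ze' j u \<omega>'"
  using assms
proof (induction u arbitrary: j)
  case 0 then show ?case by simp
next
  case (Suc u)
  then have IH: "\<And>j. rho g Q xi ze j u \<omega> = rho g Q xi' ze' j u \<omega>'" by auto
  from Suc.prems have "xi (Suc u) \<omega> = xi' (Suc u) \<omega>'" "ze (Suc u) \<omega> = ze' (Suc u) \<omega>'" by auto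
  then show ?case by (simp add: IH split: nat.split)
qed

lemma fst_meas[measurable]:
  "s \<in> I \<Longrightarrow> (\<lambda>y. fst (y s)) \<in> borel_measurable (PiM I (\<lambda>_. borel :: ('c::second_countable_topology \<times> 'd::second_countable_topology) measure))"
  using measurable_compose[OF measurable_component_singleton[of s I "\<lambda>_. borel"],
      OF _ borel_measurable_continuous_onI[OF continuous_on_fst[OF continuous_on_id]]]
  by simp

lemma snd_meas[measurable]:
  "s \<in> I \<Longrightarrow> (\<lambda>y. snd (y s)) \<in> borel_measurable (PiM I (\<lambda>_. borel :: ('c::second_countable_topology \<times> 'd::second_countable_topology) measure))"
  using measurable_compose[OF measurable_component_singleton[of s I "\<lambda>_. borel"],
      OF _ borel_measurable_continuous_onI[OF continuous_on_snd[OF continuous_on_id]]]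
  by simp

lemma mv_meas[measurable]:
  fixes f :: "'b \<Rightarrow> real^'n" and A :: "'b \<Rightarrow> real^'n^'m"
  assumes [measurable]: "f \<in> borel_measurable N" "A \<in> borel_measurable N"
  shows "(\<lambda>y. A y *v f y) \<in> borel_measurable N"
  by (rule vec_measurableI) (simp add: matrix_vector_mult_def)

lemma vec_measurableI':
  fixes F :: "'b \<Rightarrow> 'c::euclidean_space^'n"
  assumes "\<And>i. (\<lambda>\<omega>. F \<omega> $ i) \<in> borel_measurable N"
  shows "F \<in> borel_measurable N"
proof (subst borel_measurable_euclidean_space, intro ballI)
  fix b :: "'c^'n" assume "b \<in> Basis"
  then obtain i u where b: "b = axis i u" by (auto simp: Basis_vec_def)
  have [measurable]: "(\<lambda>\<omega>. F \<omega> $ i) \<in> borel_measurable N" by (rule assms)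
  show "(\<lambda>x. F x \<bullet> b) \<in> borel_measurable N" by (simp add: b inner_axis)
qed

lemma outer_meas[measurable]:
  fixes f :: "'b \<Rightarrow> real^'n"
  assumes [measurable]: "f \<in> borel_measurable N"
  shows "(\<lambda>y. outer (f y) (f y)) \<in> borel_measurable N"
  by (intro vec_measurableI' vec_measurableI) (simp add: outer_def)

context D6 begin

definition RR :: "nat \<Rightarrow> nat \<Rightarrow> (nat \<Rightarrow> (real^'n) \<times> (real^'n)) \<Rightarrow> real^'n" where
  "RR j u y = rho g Q (\<lambda>s y. fst (y s)) (\<lambda>s y. snd (y s)) j u y"

definition Y :: "nat \<Rightarrow> 'a \<Rightarrow> nat \<Rightarrow> (real^'n) \<times> (real^'n)" where
  "Y t \<omega> = (\<lambda>s\<in>{1..<t}. (xi s \<omega>, ze s \<omega>))"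

lemma rho_Y: "u < t \<Longrightarrow> rho g Q xi ze j u \<omega> = RR j u (Y t \<omega>)"
  unfolding RR_def by (rule rho_local) (auto simp: Y_def)

lemma RR_meas[measurable]: "{1..u} \<subseteq> I \<Longrightarrow> RR j u \<in> borel_measurable (PiM I (\<lambda>_. borel))"
proof (induction u arbitrary: j)
  case 0 then show ?case by (simp add: RR_def)
next
  case (Suc u)
  have "{1..u} \<subseteq> I" using Suc.prems by auto
  then have IH[measurable]: "\<And>j. RR j u \<in> borel_measurable (PiM I (\<lambda>_. borel))" using Suc.IH by auto
  have s: "Suc u \<in> I" using Suc.prems by auto
  show ?case
  proof (cases j)
    case 0
    have "RR j (Suc u) = (\<lambda>y. (mat 1 - g (Suc u) *\<^sub>R Q) *v RR j u y + g (Suc u) *\<^sub>R snd (y (Suc u)))"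
      using 0 by (simp add: RR_def fun_eq_iff)
    then show ?thesis using s by simp
  next
    case (Suc j')
    have "RR j (Suc u) = (\<lambda>y. (mat 1 - g (Suc u) *\<^sub>R Q) *v RR j u y +
        g (Suc u) *\<^sub>R ((Q - outer (fst (y (Suc u))) (fst (y (Suc u)))) *v RR j' u y))"
      using Suc by (simp add: RR_def fun_eq_iff)
    then show ?thesis using s by simp
  qed
qed

lemma XX_meas: "s \<in> {1..L} \<Longrightarrow> (\<lambda>\<omega>. (xi s \<omega>, ze s \<omega>)) \<in> borel_measurable M"
  using indep unfolding indep_vars_def by auto

lemma Y_meas[measurable]: "t \<le> Suc L \<Longrightarrow> Y t \<in> measurable M (PiM {1..<t} (\<lambda>_. borel))"
  unfolding Y_def by (rule measurable_restrict) (rule XX_meas, auto)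

lemma rho_meas[measurable]: "u \<le> L \<Longrightarrow> rho g Q xi ze j u \<in> borel_measurable M"
proof -
  assume u: "u \<le> L"
  have "rho g Q xi ze j u = (\<lambda>\<omega>. RR j u (Y (Suc u) \<omega>))" by (simp add: fun_eq_iff rho_Y)
  moreover have "(\<lambda>\<omega>. RR j u (Y (Suc u) \<omega>)) \<in> borel_measurable M"
  proof -
    have "{1..u} \<subseteq> {1..<Suc u}" by auto
    then show ?thesis using measurable_compose[OF Y_meas[of "Suc u"] RR_meas[of u "{1..<Suc u}" j]] u by auto
  qed
  ultimately show ?thesis by simp
qed

lemma indep_prod:
  fixes f :: "(nat \<Rightarrow> (real^'n) \<times> (real^'n)) \<Rightarrow> real" and h :: "(real^'n) \<times> (real^'n) \<Rightarrow> real"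
  assumes t: "t \<in> {1..L}"
    and f: "f \<in> borel_measurable (PiM {1..<t} (\<lambda>_. borel))" and h: "h \<in> borel_measurable borel"
    and fi: "integrable M (\<lambda>\<omega>. f (Y t \<omega>))" and hi: "integrable M (\<lambda>\<omega>. h (xi t \<omega>, ze t \<omega>))"
  shows "integrable M (\<lambda>\<omega>. f (Y t \<omega>) * h (xi t \<omega>, ze t \<omega>))"
    "(\<integral>\<omega>. f (Y t \<omega>) * h (xi t \<omega>, ze t \<omega>) \<partial>M) = (\<integral>\<omega>. f (Y t \<omega>) \<partial>M) * (\<integral>\<omega>. h (xi t \<omega>, ze t \<omega>) \<partial>M)"
proof -
  have ind: "indep_var (PiM {1..<t} (\<lambda>_. borel)) (Y t) (PiM {t} (\<lambda>_. borel))
      (\<lambda>\<omega>. restrict (\<lambda>s. (xi s \<omega>, ze s \<omega>)) {t})"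
    unfolding Y_def using t by (intro indep_var_restrict[OF indep]) auto
  have hm: "(\<lambda>y. h (y t)) \<in> borel_measurable (PiM {t} (\<lambda>_. borel))"
    using measurable_compose[OF measurable_component_singleton[of t "{t}" "\<lambda>_. borel"] h] by simp
  have "indep_var borel (f \<circ> Y t) borel ((\<lambda>y. h (y t)) \<circ> (\<lambda>\<omega>. restrict (\<lambda>s. (xi s \<omega>, ze s \<omega>)) {t}))"
    by (rule indep_var_compose[OF ind f hm])
  then have i2: "indep_var borel (\<lambda>\<omega>. f (Y t \<omega>)) borel (\<lambda>\<omega>. h (xi t \<omega>, ze t \<omega>))"
    by (simp add: comp_def)
  show "integrable M (\<lambda>\<omega>. f (Y t \<omega>) * h (xi t \<omega>, ze t \<omega>))"
    by (rule indep_var_integrable[OF i2 fi hi])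
  show "(\<integral>\<omega>. f (Y t \<omega>) * h (xi t \<omega>, ze t \<omega>) \<partial>M) = (\<integral>\<omega>. f (Y t \<omega>) \<partial>M) * (\<integral>\<omega>. h (xi t \<omega>, ze t \<omega>) \<partial>M)"
    by (rule indep_var_lebesgue_integral[OF i2 fi hi])
qed

end




lemma fst_borel[measurable]: "(\<lambda>p. fst p) \<in> borel_measurable (borel :: ('c::second_countable_topology \<times> 'd::second_countable_topology) measure)"
  by (intro borel_measurable_continuous_onI continuous_intros)
lemma snd_borel[measurable]: "(\<lambda>p. snd p) \<in> borel_measurable (borel :: ('c::second_countable_topology \<times> 'd::second_countable_topology) measure)"
  by (intro borel_measurable_continuous_onI continuous_intros)

lemma sq_inner_sum: "(u \<bullet> (r::real^'n))\<^sup>2 = (\<Sum>i\<in>UNIV. \<Sum>l\<in>UNIV. (u $ i * u $ l) * (r $ i * r $ l))"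
  by (simp add: inner_vec_def power2_eq_square sum_product mult_ac)

context D6 begin

definition C :: "nat \<Rightarrow> real" where "C k = sigma\<^sup>2 * g0 ^ k * R ^ (2 * k)"

lemma C_nonneg: "0 \<le> C k"
  using g0_pos by (simp add: C_def)

definition RH :: "nat \<Rightarrow> bool" where
  "RH u \<longleftrightarrow> (\<forall>k v. integrable M (\<lambda>\<omega>. (v \<bullet> rho g Q xi ze k u \<omega>)\<^sup>2) \<and>
      (\<integral>\<omega>. (v \<bullet> rho g Q xi ze k u \<omega>)\<^sup>2 \<partial>M) \<le> C k * g0 * (v \<bullet> v))"

definition ZH :: "nat \<Rightarrow> bool" where
  "ZH t \<longleftrightarrow> (\<forall>k v. integrable M (\<lambda>\<omega>. (v \<bullet> zetak g Q xi ze k t \<omega>)\<^sup>2) \<and>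
      (\<integral>\<omega>. (v \<bullet> zetak g Q xi ze k t \<omega>)\<^sup>2 \<partial>M) \<le> C k * (v \<bullet> (Q *v v)))"

lemma RH0: "RH 0"
  unfolding RH_def using C_nonneg g0_pos by (simp add: mult_nonneg_nonneg)

lemma zeta_meas[measurable]: "Suc u \<le> L \<Longrightarrow> zetak g Q xi ze k (Suc u) \<in> borel_measurable M"
proof -
  assume u: "Suc u \<le> L"
  then have [measurable]: "xi (Suc u) \<in> borel_measurable M" "ze (Suc u) \<in> borel_measurable M"
    "\<And>j. rho g Q xi ze j u \<in> borel_measurable M"
    using meas_xi meas_ze by auto
  show ?thesis
    by (cases k) (simp_all add: zetak_def[abs_def])
qed

lemma RH_VL2: "u \<le> L \<Longrightarrow> RH u \<Longrightarrow> VL2 M (rho g Q xi ze k u)"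
  unfolding RH_def VL2_def by simp

lemma Z_step:
  assumes u: "Suc u \<le> L" and rh: "RH u"
  shows "ZH (Suc u)"
  unfolding ZH_def
proof (intro allI)
  fix k v
  have t: "Suc u \<in> {1..L}" using u by simp
  note [measurable] = xi_meas[OF t] ze_meas[OF t]
  show "integrable M (\<lambda>\<omega>. (v \<bullet> zetak g Q xi ze k (Suc u) \<omega>)\<^sup>2) \<and>
      (\<integral>\<omega>. (v \<bullet> zetak g Q xi ze k (Suc u) \<omega>)\<^sup>2 \<partial>M) \<le> C k * (v \<bullet> (Q *v v))"
  proof (cases k)
    case 0
    have e: "(v \<bullet> zetak g Q xi ze k (Suc u) \<omega>)\<^sup>2 = v \<bullet> (outer (ze (Suc u) \<omega>) (ze (Suc u) \<omega>) *v v)" for \<omega>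
      using 0 by (simp add: zetak_def quad_outer)
    have "(\<integral>\<omega>. (v \<bullet> zetak g Q xi ze k (Suc u) \<omega>)\<^sup>2 \<partial>M)
       = v \<bullet> ((\<integral>\<omega>. outer (ze (Suc u) \<omega>) (ze (Suc u) \<omega>) \<partial>M) *v v)"
      unfolding e by (rule quad_integral[OF int_ze2[OF t], symmetric])
    also have "\<dots> \<le> v \<bullet> ((sigma^2 *\<^sub>R Q) *v v)" by (rule loewner_leD[OF noise[OF t]])
    finally show ?thesis
      unfolding e using quad_integrable[OF int_ze2[OF t]] 0 by (simp add: quad_scale C_def)
  next
    case (Suc j)
    define r where "r = (\<lambda>\<omega>. rho g Q xi ze j u \<omega>)"
    define a where "a = (\<lambda>\<omega>. avec Q v (xi (Suc u) \<omega>))"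
    have uL: "u \<le> L" using u by simp
    have VL: "VL2 M r" unfolding r_def by (rule RH_VL2[OF uL rh])
    have [measurable]: "r \<in> borel_measurable M" using VL by (simp add: VL2_def)
    have rY: "r \<omega> = RR j u (Y (Suc u) \<omega>)" for \<omega> unfolding r_def by (rule rho_Y) simp
    have aX: "a \<omega> = (\<lambda>p. avec Q v (fst p)) (xi (Suc u) \<omega>, ze (Suc u) \<omega>)" for \<omega> by (simp add: a_def)
    have sub: "{1..u} \<subseteq> {1..<Suc u}" by auto
    note RRm[measurable] = RR_meas[OF sub]
    have ze_eq: "v \<bullet> zetak g Q xi ze k (Suc u) \<omega> = a \<omega> \<bullet> r \<omega>" for \<omega>
      using Suc by (simp add: zetak_def a_def r_def avec_def dot_lmul_matrix)
    define S where "S i l = (\<integral>\<omega>. r \<omega> $ i * r \<omega> $ l \<partial>M)" for i l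
    have rint: "integrable M (\<lambda>\<omega>. r \<omega> $ i * r \<omega> $ l)" for i l by (rule VL2_comp_integrable[OF VL])
    have aint: "integrable M (\<lambda>\<omega>. a \<omega> $ i * a \<omega> $ l)" for i l
      unfolding a_def by (rule a_prod_int[OF t])
    have trm: "integrable M (\<lambda>\<omega>. (r \<omega> $ i * r \<omega> $ l) * (a \<omega> $ i * a \<omega> $ l))
       \<and> (\<integral>\<omega>. (r \<omega> $ i * r \<omega> $ l) * (a \<omega> $ i * a \<omega> $ l) \<partial>M) = S i l * (\<integral>\<omega>. a \<omega> $ i * a \<omega> $ l \<partial>M)" for i l
    proof -
      have fm: "(\<lambda>y. RR j u y $ i * RR j u y $ l) \<in> borel_measurable (PiM {1..<Suc u} (\<lambda>_. borel))"
        by measurable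
      have "(\<lambda>x. avec Q v x $ i * avec Q v x $ l) \<in> borel_measurable borel"
        unfolding avec_eq by measurable
      from measurable_compose[OF fst_borel[where 'd="real^'n"] this]
      have hm: "(\<lambda>p::(real^'n) \<times> (real^'n). avec Q v (fst p) $ i * avec Q v (fst p) $ l) \<in> borel_measurable borel" by simp
      note ip = indep_prod[OF t fm hm]
      show ?thesis using ip rint[of i l] aint[of i l]
        by (simp add: rY[symmetric] aX[symmetric] S_def a_def)
    qed
    have sq_eq: "(v \<bullet> zetak g Q xi ze k (Suc u) \<omega>)\<^sup>2
        = (\<Sum>i\<in>UNIV. \<Sum>l\<in>UNIV. (r \<omega> $ i * r \<omega> $ l) * (a \<omega> $ i * a \<omega> $ l))" for \<omega>
      unfolding ze_eq sq_inner_sum by (simp add: mult_ac)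
    have int1: "integrable M (\<lambda>\<omega>. (v \<bullet> zetak g Q xi ze k (Suc u) \<omega>)\<^sup>2)"
      unfolding sq_eq using trm by auto
    have "(\<integral>\<omega>. (v \<bullet> zetak g Q xi ze k (Suc u) \<omega>)\<^sup>2 \<partial>M)
       = (\<Sum>i\<in>UNIV. \<Sum>l\<in>UNIV. S i l * (\<integral>\<omega>. a \<omega> $ i * a \<omega> $ l \<partial>M))"
      unfolding sq_eq using trm by (simp add: integral_sum)
    also have "\<dots> = (\<integral>\<omega>. (\<Sum>i\<in>UNIV. \<Sum>l\<in>UNIV. (a \<omega> $ i * a \<omega> $ l) * S i l) \<partial>M)"
      using aint by (simp add: integral_sum mult_ac)
    also have "\<dots> \<le> (\<integral>\<omega>. C j * g0 * (a \<omega> \<bullet> a \<omega>) \<partial>M)"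
    proof (rule integral_mono)
      show "integrable M (\<lambda>\<omega>. \<Sum>i\<in>UNIV. \<Sum>l\<in>UNIV. a \<omega> $ i * a \<omega> $ l * S i l)"
        using aint by auto
      show "integrable M (\<lambda>\<omega>. C j * g0 * (a \<omega> \<bullet> a \<omega>))"
        unfolding a_def using a_sq(1)[OF t] by auto
      fix \<omega>
      let ?w = "a \<omega>"
      have "(\<Sum>i\<in>UNIV. \<Sum>l\<in>UNIV. ?w $ i * ?w $ l * S i l) = (\<integral>\<omega>'. (?w \<bullet> r \<omega>')\<^sup>2 \<partial>M)"
        unfolding sq_inner_sum S_def using rint by (simp add: integral_sum)
      also have "\<dots> \<le> C j * g0 * (?w \<bullet> ?w)"
        using rh unfolding RH_def r_def by blast
      finally show "(\<Sum>i\<in>UNIV. \<Sum>l\<in>UNIV. ?w $ i * ?w $ l * S i l) \<le> C j * g0 * (?w \<bullet> ?w)" .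
    qed
    also have "\<dots> = C j * g0 * (\<integral>\<omega>. a \<omega> \<bullet> a \<omega> \<partial>M)" by simp
    also have "\<dots> \<le> C j * g0 * (R\<^sup>2 * (v \<bullet> (Q *v v)))"
      unfolding a_def using a_sq_bound[OF t] C_nonneg g0_pos by (intro mult_left_mono) auto
    also have "\<dots> = C k * (v \<bullet> (Q *v v))"
      using Suc by (simp add: C_def power_add power_mult power2_eq_square mult_ac)
    finally show ?thesis using int1 by simp
  qed
qed

end




context D6 begin

lemma cross_zero:
  assumes u: "Suc u \<le> L" and rh: "RH u"
  shows "(\<integral>\<omega>. (w \<bullet> rho g Q xi ze k u \<omega>) * (v \<bullet> zetak g Q xi ze k (Suc u) \<omega>) \<partial>M) = 0"
proof -
  have t: "Suc u \<in> {1..L}" using u by simp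
  have uL: "u \<le> L" using u by simp
  note [measurable] = xi_meas[OF t] ze_meas[OF t] rho_meas[OF uL]
  have sub: "{1..u} \<subseteq> {1..<Suc u}" by auto
  note RRm[measurable] = RR_meas[OF sub]
  have rY: "rho g Q xi ze j u \<omega> = RR j u (Y (Suc u) \<omega>)" for j \<omega> by (rule rho_Y) simp
  have VLk: "VL2 M (rho g Q xi ze k u)" by (rule RH_VL2[OF uL rh])
  have fint: "integrable M (\<lambda>\<omega>. w \<bullet> rho g Q xi ze k u \<omega>)"
  proof (rule square_integrable_imp_integrable)
    show "(\<lambda>\<omega>. w \<bullet> rho g Q xi ze k u \<omega>) \<in> borel_measurable M" by measurable
    show "integrable M (\<lambda>\<omega>. (w \<bullet> rho g Q xi ze k u \<omega>)\<^sup>2)" using VLk unfolding VL2_def by blast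
  qed
  show ?thesis
  proof (cases k)
    case 0
    have fm: "(\<lambda>y. w \<bullet> RR k u y) \<in> borel_measurable (PiM {1..<Suc u} (\<lambda>_. borel))" by measurable
    have "(\<lambda>x::real^'n. v \<bullet> x) \<in> borel_measurable borel"
      by (intro borel_measurable_continuous_onI continuous_intros)
    from measurable_compose[OF snd_borel[where 'c="real^'n"] this]
    have hm: "(\<lambda>p::(real^'n) \<times> (real^'n). v \<bullet> snd p) \<in> borel_measurable borel" .
    have hint: "integrable M (\<lambda>\<omega>. v \<bullet> ze (Suc u) \<omega>)"
      using integrable_inner_right[of v M "ze (Suc u)"] int_ze[OF t] by blast
    note ip = indep_prod[OF t fm hm, unfolded snd_conv]
    have "(\<integral>\<omega>. v \<bullet> ze (Suc u) \<omega> \<partial>M) = v \<bullet> (\<integral>\<omega>. ze (Suc u) \<omega> \<partial>M)"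
      using integral_inner_right[of v M "ze (Suc u)"] int_ze[OF t] by blast
    then have m0: "(\<integral>\<omega>. v \<bullet> ze (Suc u) \<omega> \<partial>M) = 0" using mean0[OF t] by simp
    have zk: "zetak g Q xi ze k (Suc u) = ze (Suc u)" using 0 by (simp add: zetak_def[abs_def])
    have fint': "integrable M (\<lambda>\<omega>. w \<bullet> RR k u (Y (Suc u) \<omega>))"
      using fint by (simp only: rY)
    have "(\<integral>\<omega>. w \<bullet> RR k u (Y (Suc u) \<omega>) * (v \<bullet> ze (Suc u) \<omega>) \<partial>M) = 0"
      using ip(2)[OF fint' hint] m0 by simp
    then show ?thesis unfolding zk by (simp only: rY)
  next
    case (Suc j)
    define a where "a = (\<lambda>\<omega>. avec Q v (xi (Suc u) \<omega>))"
    have VLj: "VL2 M (rho g Q xi ze j u)" by (rule RH_VL2[OF uL rh])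
    have ze_eq: "v \<bullet> zetak g Q xi ze k (Suc u) \<omega> = a \<omega> \<bullet> rho g Q xi ze j u \<omega>" for \<omega>
      using Suc by (simp add: zetak_def a_def avec_def dot_lmul_matrix)
    have trm: "(\<integral>\<omega>. ((w \<bullet> rho g Q xi ze k u \<omega>) * rho g Q xi ze j u \<omega> $ i) * a \<omega> $ i \<partial>M) = 0
      \<and> integrable M (\<lambda>\<omega>. ((w \<bullet> rho g Q xi ze k u \<omega>) * rho g Q xi ze j u \<omega> $ i) * a \<omega> $ i)" for i
    proof -
      have fm: "(\<lambda>y. (w \<bullet> RR k u y) * RR j u y $ i) \<in> borel_measurable (PiM {1..<Suc u} (\<lambda>_. borel))"
        by measurable
      have "(\<lambda>x. avec Q v x $ i) \<in> borel_measurable borel"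
        unfolding avec_eq by measurable
      from measurable_compose[OF fst_borel[where 'd="real^'n"] this]
      have hm: "(\<lambda>p::(real^'n) \<times> (real^'n). avec Q v (fst p) $ i) \<in> borel_measurable borel" by simp
      have fi: "integrable M (\<lambda>\<omega>. (w \<bullet> rho g Q xi ze k u \<omega>) * rho g Q xi ze j u \<omega> $ i)"
      proof (rule prod_integrable)
        show "integrable M (\<lambda>\<omega>. (w \<bullet> rho g Q xi ze k u \<omega>)\<^sup>2)" using VLk unfolding VL2_def by blast
        have "integrable M (\<lambda>\<omega>. (axis i 1 \<bullet> rho g Q xi ze j u \<omega>)\<^sup>2)" using VLj unfolding VL2_def by blast
        then show "integrable M (\<lambda>\<omega>. (rho g Q xi ze j u \<omega> $ i)\<^sup>2)" by (simp only: inner_axis' inner_real_def mult_1)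
        show "(\<lambda>\<omega>. w \<bullet> rho g Q xi ze k u \<omega>) \<in> borel_measurable M" by measurable
        show "(\<lambda>\<omega>. rho g Q xi ze j u \<omega> $ i) \<in> borel_measurable M" by measurable
      qed
      have fi': "integrable M (\<lambda>\<omega>. (w \<bullet> RR k u (Y (Suc u) \<omega>)) * RR j u (Y (Suc u) \<omega>) $ i)"
        using fi by (simp only: rY)
      have hi: "integrable M (\<lambda>\<omega>. avec Q v (xi (Suc u) \<omega>) $ i)" by (rule a_comp(1)[OF t])
      note ip = indep_prod[OF t fm hm, unfolded fst_conv, OF fi' hi]
      have "(\<integral>\<omega>. (w \<bullet> RR k u (Y (Suc u) \<omega>)) * RR j u (Y (Suc u) \<omega>) $ i * avec Q v (xi (Suc u) \<omega>) $ i \<partial>M) = 0"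
        using ip(2) a_comp(2)[OF t, of v i] by simp
      moreover note ip(1)
      ultimately show ?thesis unfolding a_def by (simp only: rY)
    qed
    have "(\<lambda>\<omega>. (w \<bullet> rho g Q xi ze k u \<omega>) * (v \<bullet> zetak g Q xi ze k (Suc u) \<omega>))
       = (\<lambda>\<omega>. \<Sum>i\<in>UNIV. ((w \<bullet> rho g Q xi ze k u \<omega>) * rho g Q xi ze j u \<omega> $ i) * a \<omega> $ i)"
    proof (rule ext)
      fix \<omega>
      have "a \<omega> \<bullet> rho g Q xi ze j u \<omega> = (\<Sum>i\<in>UNIV. rho g Q xi ze j u \<omega> $ i * a \<omega> $ i)"
        by (simp add: inner_vec_def mult.commute)
      then show "(w \<bullet> rho g Q xi ze k u \<omega>) * (v \<bullet> zetak g Q xi ze k (Suc u) \<omega>)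
       = (\<Sum>i\<in>UNIV. ((w \<bullet> rho g Q xi ze k u \<omega>) * rho g Q xi ze j u \<omega> $ i) * a \<omega> $ i)"
        unfolding ze_eq by (simp add: sum_distrib_left mult.assoc)
    qed
    then show ?thesis using trm by (simp add: integral_sum)
  qed
qed

end




context D6 begin

lemma rho_Suc_eq: "rho g Q xi ze k (Suc u) \<omega> =
   (mat 1 - g (Suc u) *\<^sub>R Q) *v rho g Q xi ze k u \<omega> + g (Suc u) *\<^sub>R zetak g Q xi ze k (Suc u) \<omega>"
  by (cases k) (simp_all add: zetak_def)

lemma w_eq: "v v* (mat 1 - c *\<^sub>R Q) = v - c *\<^sub>R (v v* Q)"
proof -
  have "v v* (c *\<^sub>R Q) = c *\<^sub>R (v v* Q)"
    by (simp add: vec_eq_iff vector_matrix_mult_def sum_distrib_left mult_ac)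
  then show ?thesis by (simp add: vector_matrix_mult_diff_rdistrib)
qed

lemma final_ineq:
  fixes c \<gamma> q n vv :: real
  assumes c: "0 \<le> c" and q: "0 \<le> q" and n: "n \<le> R\<^sup>2 * q" and \<gamma>: "0 < \<gamma>" "\<gamma> \<le> g0"
  shows "c * g0 * (vv - 2 * \<gamma> * q + \<gamma>\<^sup>2 * n) + \<gamma>\<^sup>2 * (c * q) \<le> c * g0 * vv"
proof -
  have h1: "\<gamma>\<^sup>2 * (g0 * n) \<le> \<gamma>\<^sup>2 * (g0 * R\<^sup>2 * q)"
    using n g0_pos by (intro mult_left_mono) (auto simp: mult.assoc)
  have "g0 * R\<^sup>2 * q \<le> (1/4) * q" using g0R q by (intro mult_right_mono) auto
  then have h2: "\<gamma>\<^sup>2 * (g0 * R\<^sup>2 * q) \<le> \<gamma>\<^sup>2 * ((1/4) * q)" by (intro mult_left_mono) auto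
  have h3: "\<gamma> * (\<gamma> * q) \<le> \<gamma> * (g0 * q)" using \<gamma> q by (intro mult_left_mono mult_right_mono) auto
  have h4: "0 \<le> \<gamma> * (g0 * q)" using \<gamma> q g0_pos by simp
  have br: "g0 * (vv - 2 * \<gamma> * q + \<gamma>\<^sup>2 * n) + \<gamma>\<^sup>2 * q - g0 * vv \<le> 0"
  proof -
    have "g0 * (vv - 2 * \<gamma> * q + \<gamma>\<^sup>2 * n) + \<gamma>\<^sup>2 * q - g0 * vv
        = -2 * (\<gamma> * (g0 * q)) + \<gamma>\<^sup>2 * (g0 * n) + \<gamma> * (\<gamma> * q)"
      by (simp add: algebra_simps power2_eq_square)
    also have "\<dots> \<le> -2 * (\<gamma> * (g0 * q)) + \<gamma>\<^sup>2 * ((1/4) * q) + \<gamma> * (\<gamma> * q)"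
      using h1 h2 by linarith
    also have "\<gamma>\<^sup>2 * ((1/4) * q) = (1/4) * (\<gamma> * (\<gamma> * q))" by (simp add: power2_eq_square)
    finally show ?thesis using h3 h4 by linarith
  qed
  have "c * (g0 * (vv - 2 * \<gamma> * q + \<gamma>\<^sup>2 * n) + \<gamma>\<^sup>2 * q - g0 * vv) \<le> 0"
    using c br by (rule mult_nonneg_nonpos)
  then show ?thesis by (simp add: algebra_simps)
qed

lemma rho_step:
  assumes u: "Suc u \<le> L" and rh: "RH u"
  shows "RH (Suc u)"
  unfolding RH_def
proof (intro allI)
  fix k v
  have t: "Suc u \<in> {1..L}" using u by simp
  have uL: "u \<le> L" using u by simp
  note [measurable] = rho_meas[OF uL] zeta_meas[OF u]
  define \<gamma> where "\<gamma> = g (Suc u)"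
  define w where "w = v v* (mat 1 - \<gamma> *\<^sub>R Q)"
  define X where "X = (\<lambda>\<omega>. w \<bullet> rho g Q xi ze k u \<omega>)"
  define Z where "Z = (\<lambda>\<omega>. v \<bullet> zetak g Q xi ze k (Suc u) \<omega>)"
  have [measurable]: "X \<in> borel_measurable M" "Z \<in> borel_measurable M"
    unfolding X_def Z_def by measurable
  have zh: "ZH (Suc u)" by (rule Z_step[OF u rh])
  have Xi: "integrable M (\<lambda>\<omega>. (X \<omega>)\<^sup>2)" and Xb: "(\<integral>\<omega>. (X \<omega>)\<^sup>2 \<partial>M) \<le> C k * g0 * (w \<bullet> w)"
    using rh unfolding RH_def X_def by blast+
  have Zi: "integrable M (\<lambda>\<omega>. (Z \<omega>)\<^sup>2)" and Zb: "(\<integral>\<omega>. (Z \<omega>)\<^sup>2 \<partial>M) \<le> C k * (v \<bullet> (Q *v v))"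
    using zh unfolding ZH_def Z_def by blast+
  have XZi: "integrable M (\<lambda>\<omega>. X \<omega> * Z \<omega>)" by (rule prod_integrable) (auto intro: Xi Zi)
  have XZ0: "(\<integral>\<omega>. X \<omega> * Z \<omega> \<partial>M) = 0"
    unfolding X_def Z_def by (rule cross_zero[OF u rh])
  have e: "(v \<bullet> rho g Q xi ze k (Suc u) \<omega>)\<^sup>2 = (X \<omega>)\<^sup>2 + (2 * \<gamma>) * (X \<omega> * Z \<omega>) + \<gamma>\<^sup>2 * (Z \<omega>)\<^sup>2" for \<omega>
  proof -
    have "v \<bullet> rho g Q xi ze k (Suc u) \<omega> = X \<omega> + \<gamma> * Z \<omega>"
      unfolding rho_Suc_eq X_def Z_def w_def \<gamma>_def
      by (simp add: inner_add_right dot_lmul_matrix)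
    then show ?thesis by (simp add: power2_eq_square algebra_simps)
  qed
  show "integrable M (\<lambda>\<omega>. (v \<bullet> rho g Q xi ze k (Suc u) \<omega>)\<^sup>2) \<and>
      (\<integral>\<omega>. (v \<bullet> rho g Q xi ze k (Suc u) \<omega>)\<^sup>2 \<partial>M) \<le> C k * g0 * (v \<bullet> v)"
  proof
    show "integrable M (\<lambda>\<omega>. (v \<bullet> rho g Q xi ze k (Suc u) \<omega>)\<^sup>2)"
      unfolding e using Xi Zi XZi by auto
    have "(\<integral>\<omega>. (v \<bullet> rho g Q xi ze k (Suc u) \<omega>)\<^sup>2 \<partial>M)
        = (\<integral>\<omega>. (X \<omega>)\<^sup>2 \<partial>M) + (2 * \<gamma>) * (\<integral>\<omega>. X \<omega> * Z \<omega> \<partial>M) + \<gamma>\<^sup>2 * (\<integral>\<omega>. (Z \<omega>)\<^sup>2 \<partial>M)"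
      unfolding e using Xi Zi XZi by simp
    also have "\<dots> \<le> C k * g0 * (w \<bullet> w) + \<gamma>\<^sup>2 * (C k * (v \<bullet> (Q *v v)))"
    proof -
      have "\<gamma>\<^sup>2 * (\<integral>\<omega>. (Z \<omega>)\<^sup>2 \<partial>M) \<le> \<gamma>\<^sup>2 * (C k * (v \<bullet> (Q *v v)))"
        using Zb by (intro mult_left_mono) auto
      then show ?thesis unfolding XZ0 using Xb by simp
    qed
    also have "w \<bullet> w = v \<bullet> v - 2 * \<gamma> * (v \<bullet> (Q *v v)) + \<gamma>\<^sup>2 * ((v v* Q) \<bullet> (v v* Q))"
    proof -
      have "v \<bullet> (v v* Q) = v \<bullet> (Q *v v)" by (metis dot_lmul_matrix inner_commute)
      then show ?thesis unfolding w_def w_eq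
        by (simp add: inner_diff_left inner_diff_right inner_commute power2_eq_square algebra_simps)
    qed
    also have "C k * g0 * (v \<bullet> v - 2 * \<gamma> * (v \<bullet> (Q *v v)) + \<gamma>\<^sup>2 * ((v v* Q) \<bullet> (v v* Q)))
        + \<gamma>\<^sup>2 * (C k * (v \<bullet> (Q *v v))) \<le> C k * g0 * (v \<bullet> v)"
      using C_nonneg q_nonneg[OF t] vQ_bound[OF t] g_pos g_le unfolding \<gamma>_def
      by (intro final_ineq) auto
    finally show "(\<integral>\<omega>. (v \<bullet> rho g Q xi ze k (Suc u) \<omega>)\<^sup>2 \<partial>M) \<le> C k * g0 * (v \<bullet> v)" .
  qed
qed

lemma RH_all: "u \<le> L \<Longrightarrow> RH u"
proof (induction u)
  case 0 then show ?case using RH0 by simp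
next
  case (Suc u) then show ?case using rho_step by simp
qed

lemma main:
  assumes t: "t \<in> {1..L}"
  shows "integrable M (\<lambda>\<omega>. outer (zetak g Q xi ze k t \<omega>) (zetak g Q xi ze k t \<omega>))
       \<and> loewner_le (\<integral>\<omega>. outer (zetak g Q xi ze k t \<omega>) (zetak g Q xi ze k t \<omega>) \<partial>M) ((sigma^2 * g0^k * R^(2*k)) *\<^sub>R Q)
       \<and> integrable M (\<lambda>\<omega>. outer (rho g Q xi ze k t \<omega>) (rho g Q xi ze k t \<omega>))
       \<and> loewner_le (\<integral>\<omega>. outer (rho g Q xi ze k t \<omega>) (rho g Q xi ze k t \<omega>) \<partial>M) ((sigma^2 * g0^(k+1) * R^(2*k)) *\<^sub>R mat 1)"
proof -
  obtain u where tu: "t = Suc u" using t by (cases t) auto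
  have u: "Suc u \<le> L" using t tu by simp
  have rhu: "RH u" using u by (intro RH_all) simp
  have rht: "RH t" using t by (intro RH_all) simp
  have zh: "ZH t" unfolding tu by (rule Z_step[OF u rhu])
  have VZ: "VL2 M (zetak g Q xi ze k t)"
    unfolding VL2_def using zh zeta_meas[OF u] unfolding ZH_def tu by blast
  have VR: "VL2 M (rho g Q xi ze k t)" using t by (intro RH_VL2 rht) simp
  show ?thesis
  proof (intro conjI)
    show "integrable M (\<lambda>\<omega>. outer (zetak g Q xi ze k t \<omega>) (zetak g Q xi ze k t \<omega>))" by (rule VL2_outer(1)[OF VZ])
    show "integrable M (\<lambda>\<omega>. outer (rho g Q xi ze k t \<omega>) (rho g Q xi ze k t \<omega>))" by (rule VL2_outer(1)[OF VR])
    show "loewner_le (\<integral>\<omega>. outer (zetak g Q xi ze k t \<omega>) (zetak g Q xi ze k t \<omega>) \<partial>M) ((sigma^2 * g0^k * R^(2*k)) *\<^sub>R Q)"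
    proof (rule loewner_leI)
      fix v
      show "v \<bullet> ((\<integral>\<omega>. outer (zetak g Q xi ze k t \<omega>) (zetak g Q xi ze k t \<omega>) \<partial>M) *v v)
          \<le> v \<bullet> (((sigma^2 * g0^k * R^(2*k)) *\<^sub>R Q) *v v)"
        unfolding VL2_outer(2)[OF VZ] quad_scale using zh unfolding ZH_def C_def by blast
    qed
    show "loewner_le (\<integral>\<omega>. outer (rho g Q xi ze k t \<omega>) (rho g Q xi ze k t \<omega>) \<partial>M) ((sigma^2 * g0^(k+1) * R^(2*k)) *\<^sub>R mat 1)"
    proof (rule loewner_leI)
      fix v
      have "(\<integral>\<omega>. (v \<bullet> rho g Q xi ze k t \<omega>)\<^sup>2 \<partial>M) \<le> C k * g0 * (v \<bullet> v)"
        using rht unfolding RH_def by blast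
      also have "C k * g0 = sigma^2 * g0^(k+1) * R^(2*k)" by (simp add: C_def mult_ac)
      finally show "v \<bullet> ((\<integral>\<omega>. outer (rho g Q xi ze k t \<omega>) (rho g Q xi ze k t \<omega>) \<partial>M) *v v)
          \<le> v \<bullet> (((sigma^2 * g0^(k+1) * R^(2*k)) *\<^sub>R mat 1) *v v)"
        unfolding VL2_outer(2)[OF VR] quad_scale by simp
    qed
  qed
qed

end


theorem lemmaD6:
  fixes M :: "'a measure"
    and xi ze :: "nat \<Rightarrow> 'a \<Rightarrow> real^'n"
    and Q :: "real^'n^'n"
    and R sigma g0 :: real
    and L :: nat
  assumes "prob_space M"
    and meas_xi: "\<And>t. t \<in> {1..L} \<Longrightarrow> xi t \<in> borel_measurable M"
    and meas_ze: "\<And>t. t \<in> {1..L} \<Longrightarrow> ze t \<in> borel_measurable M"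
    and indep: "prob_space.indep_vars M (\<lambda>_. borel) (\<lambda>t \<omega>. (xi t \<omega>, ze t \<omega>)) {1..L}"
    and int_xi2: "\<And>t. t \<in> {1..L} \<Longrightarrow> integrable M (\<lambda>\<omega>. outer (xi t \<omega>) (xi t \<omega>))"
    and int_xi4: "\<And>t. t \<in> {1..L} \<Longrightarrow>
       integrable M (\<lambda>\<omega>. outer (xi t \<omega>) (xi t \<omega>) ** outer (xi t \<omega>) (xi t \<omega>))"
    and int_ze: "\<And>t. t \<in> {1..L} \<Longrightarrow> integrable M (ze t)"
    and int_ze2: "\<And>t. t \<in> {1..L} \<Longrightarrow> integrable M (\<lambda>\<omega>. outer (ze t \<omega>) (ze t \<omega>))"
    and cov: "\<And>t. t \<in> {1..L} \<Longrightarrow> (\<integral>\<omega>. outer (xi t \<omega>) (xi t \<omega>) \<partial>M) = Q"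
    and mean0: "\<And>t. t \<in> {1..L} \<Longrightarrow> (\<integral>\<omega>. ze t \<omega> \<partial>M) = 0"
    and fourth: "\<And>t. t \<in> {1..L} \<Longrightarrow>
       loewner_le (\<integral>\<omega>. outer (xi t \<omega>) (xi t \<omega>) ** outer (xi t \<omega>) (xi t \<omega>) \<partial>M) (R^2 *\<^sub>R Q)"
    and noise: "\<And>t. t \<in> {1..L} \<Longrightarrow>
       loewner_le (\<integral>\<omega>. outer (ze t \<omega>) (ze t \<omega>) \<partial>M) (sigma^2 *\<^sub>R Q)"
    and g0_pos: "g0 > 0"
    and g0R: "g0 * R^2 \<le> 1/4"
  shows "\<forall>k t. t \<in> {1..L} \<longrightarrow>
     (let g = stepsize g0 L;
          Z = zetak g Q xi ze k t;
          P = rho g Q xi ze k t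
      in integrable M (\<lambda>\<omega>. outer (Z \<omega>) (Z \<omega>))
       \<and> loewner_le (\<integral>\<omega>. outer (Z \<omega>) (Z \<omega>) \<partial>M) ((sigma^2 * g0^k * R^(2*k)) *\<^sub>R Q)
       \<and> integrable M (\<lambda>\<omega>. outer (P \<omega>) (P \<omega>))
       \<and> loewner_le (\<integral>\<omega>. outer (P \<omega>) (P \<omega>) \<partial>M) ((sigma^2 * g0^(k+1) * R^(2*k)) *\<^sub>R mat 1))"
proof -
  have "D6 M xi ze Q R sigma g0 L"
    unfolding D6_def D6_axioms_def using assms by auto
  then interpret D6 M xi ze Q R sigma g0 L .
  show ?thesis using main unfolding Let_def by blast
qed

end
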